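(* Let $\Lambda=\mathbb Z[t^{\pm1}]$ and suppose $0\in W\subseteq\Lambda$. Then $W=\Lambda$ if and only if $W$ is closed under each of the following four binary operations: (1) $(w_1,w_2)\mapsto tw_1+(1-t)w_2$; (2) $(w_1,w_2)\mapsto 1+tw_1+(t-1)w_2$; (3) $(w_1,w_2)\mapsto t^{-1}w_1+(1-t^{-1})w_2$; (4) $(w_1,w_2)\mapsto -t^{-1}+t^{-1}w_1+(t^{-1}-1)w_2$. *)

theory Defs
  imports Main "HOL-Library.Poly_Mapping"
begin

text \<open>The Laurent polynomial ring Lambda = Z[t, t^-1], realised as the integral
group ring of the additive group Z: finitely supported maps int => int with
convolution product. The monomial t^k is Poly_Mapping.single k 1.\<close>

type_synonym laurent = "int \<Rightarrow>\<^sub>0 int"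

definition lt :: laurent where
  "lt = Poly_Mapping.single 1 1"

definition lt_inv :: laurent where
  "lt_inv = Poly_Mapping.single (-1) 1"

end

theory Submission
  imports Defs
begin

lemma update_eq_add_single:
  fixes f :: laurent
  assumes "a \<notin> Poly_Mapping.keys f"
  shows "Poly_Mapping.update a b f = f + Poly_Mapping.single a (b::int)"
  using assms
  by (intro poly_mapping_eqI)
     (auto simp: Poly_Mapping.lookup_update lookup_add in_keys_iff lookup_single_eq lookup_single_not_eq not_in_keys_iff_lookup_eq_zero)

lemma lt_lt_inv: "lt * lt_inv = 1"
  by (simp add: lt_def lt_inv_def mult_single)

lemma lt_single: "lt * Poly_Mapping.single k c = Poly_Mapping.single (k+1) (c::int)"
  by (simp add: lt_def mult_single add.commute)

lemma lt_inv_single: "lt_inv * Poly_Mapping.single k c = Poly_Mapping.single (k-1) (c::int)"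
  by (simp add: lt_inv_def mult_single)

theorem lemma14:
  fixes W :: "laurent set"
  assumes "0 \<in> W"
  shows "W = UNIV \<longleftrightarrow>
    ((\<forall>w1\<in>W. \<forall>w2\<in>W. lt * w1 + (1 - lt) * w2 \<in> W) \<and>
     (\<forall>w1\<in>W. \<forall>w2\<in>W. 1 + lt * w1 + (lt - 1) * w2 \<in> W) \<and>
     (\<forall>w1\<in>W. \<forall>w2\<in>W. lt_inv * w1 + (1 - lt_inv) * w2 \<in> W) \<and>
     (\<forall>w1\<in>W. \<forall>w2\<in>W. - lt_inv + lt_inv * w1 + (lt_inv - 1) * w2 \<in> W))"
proof
  assume "W = UNIV" then show "(\<forall>w1\<in>W. \<forall>w2\<in>W. lt * w1 + (1 - lt) * w2 \<in> W) \<and>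
     (\<forall>w1\<in>W. \<forall>w2\<in>W. 1 + lt * w1 + (lt - 1) * w2 \<in> W) \<and>
     (\<forall>w1\<in>W. \<forall>w2\<in>W. lt_inv * w1 + (1 - lt_inv) * w2 \<in> W) \<and>
     (\<forall>w1\<in>W. \<forall>w2\<in>W. - lt_inv + lt_inv * w1 + (lt_inv - 1) * w2 \<in> W)" by simp
next
  assume H: "(\<forall>w1\<in>W. \<forall>w2\<in>W. lt * w1 + (1 - lt) * w2 \<in> W) \<and>
     (\<forall>w1\<in>W. \<forall>w2\<in>W. 1 + lt * w1 + (lt - 1) * w2 \<in> W) \<and>
     (\<forall>w1\<in>W. \<forall>w2\<in>W. lt_inv * w1 + (1 - lt_inv) * w2 \<in> W) \<and>
     (\<forall>w1\<in>W. \<forall>w2\<in>W. - lt_inv + lt_inv * w1 + (lt_inv - 1) * w2 \<in> W)"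
  define P where "P u = (\<forall>w\<in>W. w + u \<in> W)" for u
  have Padd: "P (u + v)" if "P u" "P v" for u v
    using that unfolding P_def by (metis add.assoc)
  have S1: "lt * x \<in> W" if "x \<in> W" for x
  proof -
    have "lt * x + (1 - lt) * 0 \<in> W" using H that assms by blast
    then show ?thesis by simp
  qed
  have S2: "lt_inv * x \<in> W" if "x \<in> W" for x
  proof -
    have "lt_inv * x + (1 - lt_inv) * 0 \<in> W" using H that assms by blast
    then show ?thesis by simp
  qed
  have Plt: "P (lt * u)" if "P u" for u
  proof -
    { fix w assume w: "w \<in> W"
      then have "lt_inv * w + u \<in> W" using that P_def S2 by auto
      then have "lt * (lt_inv * w + u) \<in> W" by (rule S1)
      moreover have "lt * (lt_inv * w + u) = w + lt * u"
        by (simp add: algebra_simps lt_lt_inv flip: mult.assoc)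
      ultimately have "w + lt * u \<in> W" by simp }
    then show ?thesis unfolding P_def by blast
  qed
  have Plti: "P (lt_inv * u)" if "P u" for u
  proof -
    { fix w assume w: "w \<in> W"
      then have "lt * w + u \<in> W" using that P_def S1 by auto
      then have "lt_inv * (lt * w + u) \<in> W" by (rule S2)
      moreover have "lt_inv * (lt * w + u) = w + lt_inv * u"
        by (simp add: algebra_simps lt_lt_inv mult.commute[of lt_inv lt] flip: mult.assoc)
      ultimately have "w + lt_inv * u \<in> W" by simp }
    then show ?thesis unfolding P_def by blast
  qed
  have LL: "lt * (lt_inv * w) = w" for w by (metis lt_lt_inv mult.assoc mult_1)
  have P1: "P 1"
  proof -
    { fix w assume w: "w \<in> W"
      then have "1 + lt * (lt_inv * w) + (lt - 1) * 0 \<in> W" using H S2 assms by blast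
      moreover have "1 + lt * (lt_inv * w) + (lt - 1) * 0 = w + 1"
        by (simp add: LL)
      ultimately have "w + 1 \<in> W" by metis }
    then show ?thesis unfolding P_def by blast
  qed
  have Pm1: "P (- 1)"
  proof -
    { fix w assume w: "w \<in> W"
      then have "- lt_inv + lt_inv * w + (lt_inv - 1) * 0 \<in> W" using H assms by blast
      then have "lt * (- lt_inv + lt_inv * w + (lt_inv - 1) * 0) \<in> W" by (rule S1)
      moreover have "lt * (- lt_inv + lt_inv * w + (lt_inv - 1) * 0) = w + - 1"
        by (simp add: algebra_simps lt_lt_inv flip: mult.assoc)
      ultimately have "w + - 1 \<in> W" by simp }
    then show ?thesis unfolding P_def by blast
  qed
  have Psk: "P (Poly_Mapping.single k c)" if "c = 1 \<or> c = -1" for k c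
  proof (induct k rule: int_induct[where k=0])
    case base
    then show ?case using that P1 Pm1 by (auto simp: single_uminus)
  next
    case (step1 i)
    then show ?case using Plt[OF step1(2)] by (simp add: lt_single)
  next
    case (step2 i)
    then show ?case using Plti[OF step2(2)] by (simp add: lt_inv_single)
  qed
  have Ps: "P (Poly_Mapping.single k c)" for k c
  proof (induct c rule: int_induct[where k=0])
    case base
    then show ?case unfolding P_def by simp
  next
    case (step1 i)
    then show ?case using Padd[OF step1(2) Psk[of 1 k]] by (simp add: single_add)
  next
    case (step2 i)
    then show ?case proof -
      have "Poly_Mapping.single k (i - 1) = Poly_Mapping.single k i + Poly_Mapping.single k (-1)"
        by (simp only: single_add[symmetric]) simp
      then show ?thesis using Padd[OF step2(2) Psk[of "-1" k]] by simp
    qed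
  qed
  have Pall: "P p" for p
  proof (induct p rule: update_induct)
    case const
    then show ?case unfolding P_def by simp
  next
    case (update f a b)
    then show ?case using Padd[OF update(3) Ps] by (simp add: update_eq_add_single)
  qed
  show "W = UNIV"
  proof (rule set_eqI)
    fix p show "p \<in> W \<longleftrightarrow> p \<in> UNIV" using Pall[of p] assms unfolding P_def by force
  qed
qed

end
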